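(* Let $c<2$ and $w_0=(x_0,y_0,z_0)\in\mathbb{R}^3$ with $\kappa(w_0)=c$ and $|z_0|>2$. Then (1) for $w_1=Q_x(w_0)$: $|\tau(w_1)-\tau(w_0)|\ge |y_0z_0|\max\big(|y_0|\sqrt{z_0^2-4},\ 2\sqrt{z_0^2-c-2}\big)$; (2) for $w_1=Q_y(w_0)$: $|\tau(w_1)-\tau(w_0)|\ge |x_0z_0|\max\big(|x_0|\sqrt{z_0^2-4},\ 2\sqrt{z_0^2-c-2}\big)$.
   Context: $\kappa(x,y,z)=-x^2-y^2+z^2+xyz-2$; for $u=(x,y,z)$, $\bar z(u)=-xy-z$ and $\tau(u)=-z\,\bar z(u)$. $Q_x(x,y,z)=(yz-x,y,z)$, $Q_y(x,y,z)=(x,xz-y,z)$. *)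

theory Defs
  imports Complex_Main
begin

fun kappa :: "real \<times> real \<times> real \<Rightarrow> real" where
  "kappa (x, y, z) = - (x ^ 2) - y ^ 2 + z ^ 2 + x * y * z - 2"

fun zbar :: "real \<times> real \<times> real \<Rightarrow> real" where
  "zbar (x, y, z) = - (x * y) - z"

fun tau :: "real \<times> real \<times> real \<Rightarrow> real" where
  "tau (x, y, z) = - z * zbar (x, y, z)"

fun Qx :: "real \<times> real \<times> real \<Rightarrow> real \<times> real \<times> real" where
  "Qx (x, y, z) = (y * z - x, y, z)"

fun Qy :: "real \<times> real \<times> real \<Rightarrow> real \<times> real \<times> real" where
  "Qy (x, y, z) = (x, x * z - y, z)"

end

theory Submission
  imports Defs
begin

lemma key:
  fixes c x y z :: real
  assumes "c < 2" and xyz: "x * y * z = c + x^2 + y^2 - z^2 + 2" and "\<bar>z\<bar> > 2"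
  shows "\<bar>y * z\<bar> * max (\<bar>y\<bar> * sqrt (z^2 - 4)) (2 * sqrt (z^2 - c - 2)) \<le> \<bar>y * z * (y * z - 2 * x)\<bar>"
proof -
  have z4: "z^2 - 4 \<ge> 0"
  proof -
    have "\<bar>z\<bar>^2 \<ge> 2^2" using assms(3) by (intro power_mono) auto
    thus ?thesis by simp
  qed
  have zc: "z^2 - c - 2 \<ge> 0" using z4 assms(1) by linarith
  define A where "A = \<bar>y\<bar> * sqrt (z^2 - 4)"
  define B where "B = 2 * sqrt (z^2 - c - 2)"
  have A0: "A \<ge> 0" and B0: "B \<ge> 0" unfolding A_def B_def using z4 zc by auto
  have A2: "A^2 = y^2 * (z^2 - 4)" unfolding A_def using z4 by (simp add: power_mult_distrib)
  have B2: "B^2 = 4 * (z^2 - c - 2)" unfolding B_def using zc by (simp add: power_mult_distrib)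
  have D2: "(y * z - 2 * x)^2 = A^2 + B^2"
    unfolding A2 B2 using assms(2) by (simp add: power2_eq_square algebra_simps)
  have "A^2 \<le> (y * z - 2 * x)^2" "B^2 \<le> (y * z - 2 * x)^2" using D2 by auto
  hence "A \<le> \<bar>y * z - 2 * x\<bar>" "B \<le> \<bar>y * z - 2 * x\<bar>"
    using A0 B0 by (auto simp: abs_le_square_iff[symmetric])
  hence "max A B \<le> \<bar>y * z - 2 * x\<bar>" by simp
  hence "\<bar>y * z\<bar> * max A B \<le> \<bar>y * z\<bar> * \<bar>y * z - 2 * x\<bar>" by (simp add: mult_left_mono)
  thus ?thesis unfolding A_def B_def by (simp add: abs_mult)
qed

theorem mainTheorem9:
  fixes c x0 y0 z0 :: real
  assumes "c < 2"
    and "kappa (x0, y0, z0) = c"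
    and "\<bar>z0\<bar> > 2"
  shows "\<bar>tau (Qx (x0, y0, z0)) - tau (x0, y0, z0)\<bar>
           \<ge> \<bar>y0 * z0\<bar> * max (\<bar>y0\<bar> * sqrt (z0^2 - 4)) (2 * sqrt (z0^2 - c - 2))
         \<and> \<bar>tau (Qy (x0, y0, z0)) - tau (x0, y0, z0)\<bar>
           \<ge> \<bar>x0 * z0\<bar> * max (\<bar>x0\<bar> * sqrt (z0^2 - 4)) (2 * sqrt (z0^2 - c - 2))"
proof
  have k: "x0 * y0 * z0 = c + x0^2 + y0^2 - z0^2 + 2" using assms(2) by simp
  have e1: "tau (Qx (x0, y0, z0)) - tau (x0, y0, z0) = y0 * z0 * (y0 * z0 - 2 * x0)"
    by (simp add: algebra_simps)
  have e2: "tau (Qy (x0, y0, z0)) - tau (x0, y0, z0) = x0 * z0 * (x0 * z0 - 2 * y0)"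
    by (simp add: algebra_simps)
  show "\<bar>tau (Qx (x0, y0, z0)) - tau (x0, y0, z0)\<bar>
           \<ge> \<bar>y0 * z0\<bar> * max (\<bar>y0\<bar> * sqrt (z0^2 - 4)) (2 * sqrt (z0^2 - c - 2))"
    unfolding e1 by (rule key[OF assms(1) k assms(3)])
  have k2: "y0 * x0 * z0 = c + y0^2 + x0^2 - z0^2 + 2" using k by (simp add: algebra_simps)
  show "\<bar>tau (Qy (x0, y0, z0)) - tau (x0, y0, z0)\<bar>
           \<ge> \<bar>x0 * z0\<bar> * max (\<bar>x0\<bar> * sqrt (z0^2 - 4)) (2 * sqrt (z0^2 - c - 2))"
    unfolding e2 by (rule key[OF assms(1) k2 assms(3)])
qed

end
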